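(* Let $\mathcal{X},\mathcal{Y}$ be finite sets, $p(X,Y)$ a fully supported probability distribution on $\mathcal{X}\times\mathcal{Y}$, and $0\le\lambda\le I(X;Y)$. For $\kappa_{\mathcal{X}}\in C(\mathcal{X},\mathbb{N})$, $\kappa_{\mathcal{Y}}\in C(\mathcal{Y},\mathbb{N})$, let $\kappa=\kappa_{\mathcal{X}}\otimes\kappa_{\mathcal{Y}}\in C(\mathcal{X}\times\mathcal{Y},\mathbb{N}\times\mathbb{N})$, $\kappa(t_X,t_Y|x,y)=\kappa_{\mathcal{X}}(t_X|x)\kappa_{\mathcal{Y}}(t_Y|y)$, and let $q(x,y,t_X,t_Y)=p(x,y)\kappa_{\mathcal{X}}(t_X|x)\kappa_{\mathcal{Y}}(t_Y|y)$. Consider: (A) minimise $I_\kappa(X,Y;T)$, with $T=(T_X,T_Y)$, over all such split channels $\kappa=\kappa_{\mathcal{X}}\otimes\kappa_{\mathcal{Y}}$ subject to $D(\kappa(p(X,Y))\|\kappa(p(X)p(Y)))=\lambda$; (S) minimise $I_q(X;T_X)+I_q(Y;T_Y)$ over pairs $(q(T_X|X),q(T_Y|Y))=(\kappa_{\mathcal{X}},\kappa_{\mathcal{Y}})$ subject to $I_q(T_X;T_Y)\ge\lambda$. Then: (i) in (S), replacing the constraint $I_q(T_X;T_Y)\ge\lambda$ by $I_q(T_X;T_Y)=\lambda$ does not change the set of solutions; (ii) the sets of solutions of (A) and (S) are identical (identifying $\kappa_{\mathcal{X}}\otimes\kappa_{\mathcal{Y}}$ with the pair $(\kappa_{\ma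thcal{X}},\kappa_{\mathcal{Y}})$).
   Context: For sets $\mathcal{A},\mathcal{B}$, $C(\mathcal{A},\mathcal{B})$ denotes the set of channels (conditional probabilities) from $\mathcal{A}$ to $\mathcal{B}$. For a channel $\kappa$ and a distribution $r$ on its input space, $\kappa(r)$ denotes the output distribution $\sum_a\kappa(\cdot|a)r(a)$. $I_\kappa(X,Y;T)$ is computed from $p(x,y)\kappa(t|x,y)$; $D$ is the Kullback–Leibler divergence; $p(X),p(Y)$ are the marginals of $p(X,Y)$. *)

theory Defs
  imports "HOL-Analysis.Analysis"
begin

text \<open>Probability mass functions are real-valued functions; logarithms are natural
  (the base only rescales all information quantities and lambda consistently).\<close>

definition channel :: "('a \<Rightarrow> 'b \<Rightarrow> real) \<Rightarrow> bool" where
  "channel k \<longleftrightarrow> (\<forall>a b. 0 \<le> k a b) \<and> (\<forall>a. (k a has_sum 1) UNIV)"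

definition marg1 :: "('a \<Rightarrow> 'b \<Rightarrow> real) \<Rightarrow> 'a \<Rightarrow> real" where
  "marg1 r a = (\<Sum>\<^sub>\<infinity>b. r a b)"

definition marg2 :: "('a \<Rightarrow> 'b \<Rightarrow> real) \<Rightarrow> 'b \<Rightarrow> real" where
  "marg2 r b = (\<Sum>\<^sub>\<infinity>a. r a b)"

text \<open>Mutual information of a joint distribution r(A,B) (convention 0 log 0 = 0,
  which holds since 0 * ln _ = 0).\<close>
definition mutual_info :: "('a \<Rightarrow> 'b \<Rightarrow> real) \<Rightarrow> real" where
  "mutual_info r = infsum (\<lambda>(a,b). r a b * ln (r a b / (marg1 r a * marg2 r b))) UNIV"

definition kl_div :: "('a \<Rightarrow> real) \<Rightarrow> ('a \<Rightarrow> real) \<Rightarrow> real" where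
  "kl_div P Q = infsum (\<lambda>a. P a * ln (P a / Q a)) UNIV"

definition push_split ::
  "('x::finite \<Rightarrow> 'y::finite \<Rightarrow> real) \<Rightarrow> ('x \<Rightarrow> 'a \<Rightarrow> real) \<Rightarrow> ('y \<Rightarrow> 'b \<Rightarrow> real)
     \<Rightarrow> 'a \<times> 'b \<Rightarrow> real" where
  "push_split r kX kY = (\<lambda>(tx,ty). \<Sum>x\<in>UNIV. \<Sum>y\<in>UNIV. kX x tx * kY y ty * r x y)"

definition qdist ::
  "('x \<Rightarrow> 'y \<Rightarrow> real) \<Rightarrow> ('x \<Rightarrow> nat \<Rightarrow> real) \<Rightarrow> ('y \<Rightarrow> nat \<Rightarrow> real)
     \<Rightarrow> 'x \<Rightarrow> 'y \<Rightarrow> nat \<Rightarrow> nat \<Rightarrow> real" where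
  "qdist p kX kY x y tx ty = p x y * kX x tx * kY y ty"

definition objA :: "('x::finite \<Rightarrow> 'y::finite \<Rightarrow> real) \<Rightarrow> ('x \<Rightarrow> nat \<Rightarrow> real) \<Rightarrow> ('y \<Rightarrow> nat \<Rightarrow> real) \<Rightarrow> real" where
  "objA p kX kY = mutual_info (\<lambda>(x,y) (tx,ty). qdist p kX kY x y tx ty)"

definition feasA :: "('x::finite \<Rightarrow> 'y::finite \<Rightarrow> real) \<Rightarrow> real \<Rightarrow> ('x \<Rightarrow> nat \<Rightarrow> real) \<Rightarrow> ('y \<Rightarrow> nat \<Rightarrow> real) \<Rightarrow> bool" where
  "feasA p lam kX kY \<longleftrightarrow> channel kX \<and> channel kY \<and>
     kl_div (push_split p kX kY) (push_split (\<lambda>x y. marg1 p x * marg2 p y) kX kY) = lam"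

definition objS :: "('x::finite \<Rightarrow> 'y::finite \<Rightarrow> real) \<Rightarrow> ('x \<Rightarrow> nat \<Rightarrow> real) \<Rightarrow> ('y \<Rightarrow> nat \<Rightarrow> real) \<Rightarrow> real" where
  "objS p kX kY =
     mutual_info (\<lambda>x tx. \<Sum>y\<in>UNIV. \<Sum>\<^sub>\<infinity>ty. qdist p kX kY x y tx ty)
   + mutual_info (\<lambda>y ty. \<Sum>x\<in>UNIV. \<Sum>\<^sub>\<infinity>tx. qdist p kX kY x y tx ty)"

definition info_TT :: "('x::finite \<Rightarrow> 'y::finite \<Rightarrow> real) \<Rightarrow> ('x \<Rightarrow> nat \<Rightarrow> real) \<Rightarrow> ('y \<Rightarrow> nat \<Rightarrow> real) \<Rightarrow> real" where
  "info_TT p kX kY = mutual_info (\<lambda>tx ty. \<Sum>x\<in>UNIV. \<Sum>y\<in>UNIV. qdist p kX kY x y tx ty)"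

definition feasS_ge :: "('x::finite \<Rightarrow> 'y::finite \<Rightarrow> real) \<Rightarrow> real \<Rightarrow> ('x \<Rightarrow> nat \<Rightarrow> real) \<Rightarrow> ('y \<Rightarrow> nat \<Rightarrow> real) \<Rightarrow> bool" where
  "feasS_ge p lam kX kY \<longleftrightarrow> channel kX \<and> channel kY \<and> info_TT p kX kY \<ge> lam"

definition feasS_eq :: "('x::finite \<Rightarrow> 'y::finite \<Rightarrow> real) \<Rightarrow> real \<Rightarrow> ('x \<Rightarrow> nat \<Rightarrow> real) \<Rightarrow> ('y \<Rightarrow> nat \<Rightarrow> real) \<Rightarrow> bool" where
  "feasS_eq p lam kX kY \<longleftrightarrow> channel kX \<and> channel kY \<and> info_TT p kX kY = lam"

definition is_solution :: "('a \<Rightarrow> 'b \<Rightarrow> bool) \<Rightarrow> ('a \<Rightarrow> 'b \<Rightarrow> real) \<Rightarrow> 'a \<Rightarrow> 'b \<Rightarrow> bool" where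
  "is_solution feas obj a b \<longleftrightarrow> feas a b \<and> (\<forall>a' b'. feas a' b' \<longrightarrow> obj a b \<le> obj a' b')"

end

theory Submission
  imports Defs
begin


lemma has_sum_sum_fin:
  fixes f :: "'i \<Rightarrow> 'a \<Rightarrow> real"
  assumes "finite I" "\<And>i. i \<in> I \<Longrightarrow> (f i has_sum s i) A"
  shows "((\<lambda>t. \<Sum>i\<in>I. f i t) has_sum (\<Sum>i\<in>I. s i)) A"
  using assms
proof (induction I rule: finite_induct)
  case empty then show ?case by simp
next
  case (insert i I)
  have "((\<lambda>t. f i t + (\<Sum>i\<in>I. f i t)) has_sum (s i + (\<Sum>i\<in>I. s i))) A"
    by (rule has_sum_add) (use insert in auto)
  then show ?case using insert by simp
qed

lemma has_sum_fin_prod: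
  fixes f :: "'a::finite \<times> 'b \<Rightarrow> real" and g :: "'a \<Rightarrow> real"
  assumes "\<And>a. ((\<lambda>b. f (a,b)) has_sum g a) UNIV"
  shows "(f has_sum (\<Sum>a\<in>UNIV. g a)) UNIV"
proof -
  have "(f has_sum (\<Sum>a\<in>UNIV. g a)) (\<Union>a\<in>UNIV. {a} \<times> UNIV)"
  proof (rule sum_has_sum)
    fix a :: 'a
    have "inj_on (Pair a) UNIV" by (auto simp: inj_on_def)
    then have "(f has_sum g a) (Pair a ` UNIV) \<longleftrightarrow> ((f \<circ> Pair a) has_sum g a) UNIV"
      by (rule has_sum_reindex)
    moreover have "Pair a ` UNIV = {a} \<times> (UNIV :: 'b set)" by auto
    ultimately show "(f has_sum g a) ({a} \<times> UNIV)" using assms[of a] by (simp add: o_def)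
  qed auto
  moreover have "(\<Union>a\<in>UNIV. {a} \<times> (UNIV::'b set)) = UNIV" by auto
  ultimately show ?thesis by (metis (no_types))
qed

lemma has_sum_weighted:
  fixes h :: "'a \<Rightarrow> real" and w :: "'a \<Rightarrow> 'b \<Rightarrow> real"
  assumes w0: "\<And>a b. 0 \<le> w a b"
    and wW: "\<And>a. (w a has_sum W a) UNIV"
    and hs: "(\<lambda>a. h a * W a) summable_on UNIV"
  shows "((\<lambda>(a,b). h a * w a b) has_sum infsum (\<lambda>a. h a * W a) UNIV) UNIV"
proof -
  have W0: "0 \<le> W a" for a by (rule has_sum_nonneg[OF wW[of a]]) (simp add: w0)
  have "(\<lambda>a. norm (h a * W a)) summable_on UNIV"
    by (rule summable_on_iff_abs_summable_on_real[THEN iffD1, OF hs])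
  moreover have "(\<lambda>a. norm (h a * W a)) = (\<lambda>a. \<bar>h a\<bar> * W a)"
    using W0 by (simp add: abs_mult)
  ultimately have habs: "(\<lambda>a. \<bar>h a\<bar> * W a) summable_on UNIV" by simp
  have rows: "((\<lambda>b. \<bar>h a\<bar> * w a b) has_sum \<bar>h a\<bar> * W a) UNIV" for a
    using wW[of a] by (rule has_sum_cmult_right)
  have "(\<lambda>(a,b). \<bar>h a\<bar> * w a b) summable_on Sigma UNIV (\<lambda>_. UNIV)"
  proof (rule summable_on_SigmaI[where g="\<lambda>a. \<bar>h a\<bar> * W a"])
    show "\<And>x. x \<in> UNIV \<Longrightarrow> ((\<lambda>y. case (x, y) of (a, b) \<Rightarrow> \<bar>h a\<bar> * w a b) has_sum \<bar>h x\<bar> * W x) UNIV"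
      using rows by simp
    show "(\<lambda>a. \<bar>h a\<bar> * W a) summable_on UNIV" by (rule habs)
    show "\<And>x y. x \<in> UNIV \<Longrightarrow> y \<in> UNIV \<Longrightarrow> 0 \<le> (case (x, y) of (a, b) \<Rightarrow> \<bar>h a\<bar> * w a b)"
      using w0 by simp
  qed
  moreover have "(\<lambda>(a,b). \<bar>h a\<bar> * w a b) = (\<lambda>x. norm ((\<lambda>(a,b). h a * w a b) x))"
    using w0 by (auto simp: abs_mult)
  ultimately have "(\<lambda>x. norm ((\<lambda>(a,b). h a * w a b) x)) summable_on UNIV" by simp
  then have sm: "(\<lambda>(a,b). h a * w a b) summable_on UNIV"
    by (rule abs_summable_summable)
  have rows2: "((\<lambda>b. h a * w a b) has_sum h a * W a) UNIV" for a
    using wW[of a] by (rule has_sum_cmult_right)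
  have "((\<lambda>(a,b). h a * w a b) has_sum infsum (\<lambda>a. h a * W a) UNIV) (Sigma UNIV (\<lambda>_. UNIV))"
  proof (rule has_sum_SigmaI[where g="\<lambda>a. h a * W a"])
    show "\<And>x. x \<in> UNIV \<Longrightarrow> ((\<lambda>y. case (x, y) of (a, b) \<Rightarrow> h a * w a b) has_sum h x * W x) UNIV"
      using rows2 by simp
    show "((\<lambda>a. h a * W a) has_sum infsum (\<lambda>a. h a * W a) UNIV) UNIV" using hs by simp
    show "(\<lambda>(a,b). h a * w a b) summable_on Sigma UNIV (\<lambda>_. UNIV)" using sm by simp
  qed
  then show ?thesis by simp
qed




lemma has_sum_diff_real:
  fixes f g :: "'i \<Rightarrow> real"
  assumes "(f has_sum a) A" "(g has_sum b) A"
  shows "((\<lambda>x. f x - g x) has_sum (a - b)) A"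
proof -
  have "((\<lambda>x. - g x) has_sum (- b)) A" using assms(2) by (simp add: has_sum_uminus)
  from has_sum_add[OF assms(1) this] show ?thesis by simp
qed

lemma xlnx_bounds:
  fixes r s C :: real
  assumes "0 \<le> r" "0 \<le> s" "0 < C" "r \<le> C * s"
  shows "\<bar>r * ln (r / s)\<bar> \<le> r * \<bar>ln C\<bar> + r + s"
proof (cases "r = 0")
  case True then show ?thesis using assms by simp
next
  case False
  then have r: "0 < r" using assms by simp
  then have s: "0 < s" using assms by (smt (verit) mult_nonneg_nonpos)
  have up: "ln (r / s) \<le> ln C"
    using r s assms by (subst ln_le_cancel_iff) (auto simp: field_simps)
  have "ln (s / r) \<le> s / r - 1" using r s by (intro ln_le_minus_one) simp
  moreover have "ln (s / r) = - ln (r / s)" using r s by (simp add: ln_div)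
  ultimately have "r * ln (r / s) \<ge> r * (1 - s / r)" using r
    by (intro mult_left_mono) auto
  moreover have "r * (1 - s / r) = r - s" using r by (simp add: field_simps)
  ultimately have lo: "r * ln (r / s) \<ge> r - s" by simp
  have "r * ln (r / s) \<le> r * \<bar>ln C\<bar>" using up r
    by (intro mult_left_mono) auto
  moreover have "0 \<le> r * \<bar>ln C\<bar>" using r by simp
  ultimately show ?thesis using lo r s unfolding abs_le_iff by linarith
qed

lemma xlnx_summable:
  fixes r s :: "'i \<Rightarrow> real"
  assumes "\<And>n. 0 \<le> r n" "\<And>n. 0 \<le> s n" "0 < C" "\<And>n. r n \<le> C * s n"
    and "r summable_on UNIV" "s summable_on UNIV"
  shows "(\<lambda>n. r n * ln (r n / s n)) summable_on UNIV"
proof -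
  have g: "(\<lambda>n. r n * \<bar>ln C\<bar> + r n + s n) summable_on UNIV"
    using assms(5,6) by (intro summable_on_add summable_on_cmult_left)
  have "(\<lambda>n. norm (r n * ln (r n / s n))) summable_on UNIV"
    by (rule Infinite_Sum.abs_summable_on_comparison_test'[OF g]) (use xlnx_bounds assms in auto)
  then show ?thesis by (rule abs_summable_summable)
qed

lemma gibbs:
  fixes P Q :: "'i \<Rightarrow> real"
  assumes P0: "\<And>n. 0 \<le> P n" and Q0: "\<And>n. 0 \<le> Q n"
    and P1: "(P has_sum 1) UNIV" and Q1: "(Q has_sum 1) UNIV"
    and PQ: "\<And>n. 0 < P n \<Longrightarrow> 0 < Q n"
    and sm: "(\<lambda>n. P n * ln (P n / Q n)) summable_on UNIV"
  shows "0 \<le> infsum (\<lambda>n. P n * ln (P n / Q n)) UNIV"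
    and "infsum (\<lambda>n. P n * ln (P n / Q n)) UNIV = 0 \<Longrightarrow> P = Q"
proof -
  define d where "d n = P n * ln (P n / Q n) - (P n - Q n)" for n
  have d0: "0 \<le> d n" for n
  proof (cases "P n = 0")
    case True then show ?thesis using Q0[of n] by (simp add: d_def)
  next
    case False
    then have p: "0 < P n" using P0[of n] by simp
    then have q: "0 < Q n" using PQ by simp
    have "ln (Q n / P n) \<le> Q n / P n - 1" using p q by (intro ln_le_minus_one) simp
    moreover have "ln (Q n / P n) = - ln (P n / Q n)" using p q by (simp add: ln_div)
    ultimately have "P n * ln (P n / Q n) \<ge> P n * (1 - Q n / P n)" using p
      by (intro mult_left_mono) auto
    moreover have "P n * (1 - Q n / P n) = P n - Q n" using p by (simp add: field_simps)
    ultimately show ?thesis by (simp add: d_def)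
  qed
  have PQs: "((\<lambda>n. P n - Q n) has_sum 0) UNIV"
    using has_sum_diff_real[OF P1 Q1] by simp
  have hs: "((\<lambda>n. P n * ln (P n / Q n)) has_sum infsum (\<lambda>n. P n * ln (P n / Q n)) UNIV) UNIV"
    using sm by simp
  have dh: "(d has_sum infsum (\<lambda>n. P n * ln (P n / Q n)) UNIV) UNIV"
    using has_sum_diff_real[OF hs PQs] by (simp add: d_def[abs_def])
  show "0 \<le> infsum (\<lambda>n. P n * ln (P n / Q n)) UNIV"
    by (rule has_sum_nonneg[OF dh]) (simp add: d0)
  assume z: "infsum (\<lambda>n. P n * ln (P n / Q n)) UNIV = 0"
  have dz: "d n = 0" for n
    by (rule nonneg_has_sum_le_0D[OF dh]) (use z d0 in auto)
  show "P = Q"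
  proof
    fix n
    show "P n = Q n"
    proof (cases "P n = 0")
      case True then show ?thesis using dz[of n] by (simp add: d_def)
    next
      case False
      then have p: "0 < P n" using P0[of n] by simp
      then have q: "0 < Q n" using PQ by simp
      have "P n * ln (P n / Q n) = P n - Q n" using dz[of n] by (simp add: d_def)
      moreover have "ln (Q n / P n) = - ln (P n / Q n)" using p q by (simp add: ln_div)
      ultimately have "ln (Q n / P n) = Q n / P n - 1" using p by (simp add: field_simps)
      then have "Q n / P n = 1" using p q by (intro ln_eq_minus_one) auto
      then show ?thesis using p by simp
    qed
  qed
qed




lemma has_sum_inj_shift:
  fixes f :: "'i \<Rightarrow> real" and f' :: "'j \<Rightarrow> real" and g :: "'i \<Rightarrow> 'j"
  assumes "inj g" "\<And>z. z \<notin> range g \<Longrightarrow> f' z = 0" "\<And>z. f' (g z) = f z"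
    and "(f has_sum S) UNIV"
  shows "(f' has_sum S) UNIV"
proof -
  have "((f' \<circ> g) has_sum S) UNIV" using assms(3,4) by (simp add: o_def)
  then have "(f' has_sum S) (range g)" using has_sum_reindex[OF assms(1)] by blast
  then show ?thesis by (subst has_sum_cong_neutral[where T="range g" and g=f']) (use assms(2) in auto)
qed

lemma has_sum_nat_shift:
  fixes f :: "nat \<Rightarrow> real"
  assumes "(f has_sum S) UNIV"
  shows "((\<lambda>n. if n = 0 then c else f (n - 1)) has_sum (c + S)) UNIV"
proof -
  have a: "((\<lambda>n. if n = 0 then 0 else f (n - 1)) has_sum S) UNIV"
  proof (rule has_sum_inj_shift[where g=Suc, OF _ _ _ assms])
    fix z :: nat assume "z \<notin> range Suc" then have "z = 0" by (cases z) auto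
    then show "(if z = 0 then 0 else f (z - 1)) = 0" by simp
  qed auto
  have b: "((\<lambda>n::nat. if n = 0 then c else 0) has_sum c) UNIV"
    by (subst has_sum_cong_neutral[where T="{0}" and g="\<lambda>n. if n = 0 then c else 0"]) (auto intro!: has_sum_finiteI)
  from has_sum_add[OF b a] show ?thesis by (simp add: if_distrib cong: if_cong)
qed

definition qw :: "('a::finite \<Rightarrow> real) \<Rightarrow> ('a \<Rightarrow> nat \<Rightarrow> real) \<Rightarrow> nat \<Rightarrow> real" where
  "qw w k t = (\<Sum>x\<in>UNIV. w x * k x t)"

definition Dw :: "('a::finite \<Rightarrow> real) \<Rightarrow> ('a \<Rightarrow> nat \<Rightarrow> real) \<Rightarrow> 'a \<Rightarrow> real" where
  "Dw w k x = infsum (\<lambda>t. k x t * ln (k x t / qw w k t)) UNIV"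

definition Iw :: "('a::finite \<Rightarrow> real) \<Rightarrow> ('a \<Rightarrow> nat \<Rightarrow> real) \<Rightarrow> real" where
  "Iw w k = (\<Sum>x\<in>UNIV. w x * Dw w k x)"

definition es :: "real \<Rightarrow> ('a \<Rightarrow> nat \<Rightarrow> real) \<Rightarrow> 'a \<Rightarrow> nat \<Rightarrow> real" where
  "es s k x n = (if n = 0 then 1 - s else s * k x (n - 1))"

lemma channelD: "channel k \<Longrightarrow> 0 \<le> k a b" "channel k \<Longrightarrow> (k a has_sum 1) UNIV"
  by (auto simp: channel_def)

lemma es_channel:
  assumes "channel k" "0 \<le> s" "s \<le> 1"
  shows "channel (es s k)"
  unfolding channel_def
proof (intro conjI allI)
  fix a b show "0 \<le> es s k a b" using assms channelD[OF assms(1)] by (simp add: es_def)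
next
  fix a
  have "((\<lambda>n. s * k a n) has_sum s * 1) UNIV"
    by (rule has_sum_cmult_right[OF channelD(2)[OF assms(1)]])
  from has_sum_nat_shift[OF this, of "1 - s"] show "(es s k a has_sum 1) UNIV"
    by (simp add: es_def[abs_def])
qed

locale wch =
  fixes w :: "'a::finite \<Rightarrow> real" and k :: "'a \<Rightarrow> nat \<Rightarrow> real"
  assumes wpos: "\<And>x. 0 < w x" and wsum: "(\<Sum>x\<in>UNIV. w x) = 1" and ch: "channel k"
begin

lemma k0: "0 \<le> k x t" using channelD(1)[OF ch] .
lemma k1: "(k x has_sum 1) UNIV" using channelD(2)[OF ch] .

lemma qw_nonneg: "0 \<le> qw w k t"
  unfolding qw_def by (intro sum_nonneg) (simp add: k0 wpos less_imp_le)

lemma qw_has_sum: "(qw w k has_sum 1) UNIV"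
proof -
  have r: "((\<lambda>t. w x * k x t) has_sum w x) UNIV" for x
    using has_sum_cmult_right[OF k1[of x], of "w x"] by simp
  have "((\<lambda>t. \<Sum>x\<in>UNIV. w x * k x t) has_sum (\<Sum>x\<in>UNIV. w x)) UNIV"
    by (rule has_sum_sum_fin) (use r in auto)
  then show ?thesis using wsum by (simp add: qw_def[abs_def])
qed

lemma k_le_qw: "w x * k x t \<le> qw w k t"
proof -
  have "w x * k x t \<le> (\<Sum>x\<in>UNIV. w x * k x t)"
    by (rule member_le_sum) (auto simp: k0 wpos less_imp_le)
  then show ?thesis by (simp add: qw_def)
qed

lemma k_le_qw': "k x t \<le> (1 / w x) * qw w k t"
  using k_le_qw[of x t] wpos[of x] by (simp add: field_simps)

lemma qw_pos: "0 < k x t \<Longrightarrow> 0 < qw w k t"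
  using k_le_qw[of x t] wpos[of x] by (smt (verit) mult_pos_pos)

lemma Dw_summable: "(\<lambda>t. k x t * ln (k x t / qw w k t)) summable_on UNIV"
  by (rule xlnx_summable[where C="1 / w x"])
     (use k0 qw_nonneg wpos k_le_qw' has_sum_imp_summable[OF k1] has_sum_imp_summable[OF qw_has_sum] in auto)

lemma Iw_has_sum: "((\<lambda>(x,t). w x * (k x t * ln (k x t / qw w k t))) has_sum Iw w k) UNIV"
  unfolding Iw_def
  by (rule has_sum_fin_prod) (auto simp: Dw_def intro!: has_sum_cmult_right Dw_summable[THEN summable_iff_has_sum_infsum[THEN iffD1]])

lemma Iw_nonneg_zero:
  shows "0 \<le> Iw w k" and "Iw w k = 0 \<Longrightarrow> k x t = qw w k t"
proof -
  have D0: "0 \<le> Dw w k x" for x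
    unfolding Dw_def
    by (rule gibbs(1)) (use k0 qw_nonneg k1 qw_has_sum qw_pos Dw_summable in auto)
  have wD0: "0 \<le> w x * Dw w k x" for x using mult_nonneg_nonneg[OF less_imp_le[OF wpos] D0] by simp
  then show "0 \<le> Iw w k" unfolding Iw_def by (simp add: sum_nonneg)
  assume "Iw w k = 0"
  then have "w x * Dw w k x = 0" using wD0 unfolding Iw_def
    by (simp add: sum_nonneg_eq_0_iff)
  then have "Dw w k x = 0" using wpos[of x] by simp
  then have "k x = qw w k" unfolding Dw_def
    by (rule gibbs(2)[rotated -1]) (use k0 qw_nonneg k1 qw_has_sum qw_pos Dw_summable in auto)
  then show "k x t = qw w k t" by simp
qed

lemma mi_w: "mutual_info (\<lambda>x t. w x * k x t) = Iw w k"
proof -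
  have m1: "marg1 (\<lambda>x t. w x * k x t) x = w x" for x
    unfolding marg1_def using infsumI[OF has_sum_cmult_right[OF k1[of x], of "w x"]] by simp
  have m2: "marg2 (\<lambda>x t. w x * k x t) t = qw w k t" for t
    unfolding marg2_def qw_def by simp
  have "(\<lambda>(x,t). w x * k x t * ln (w x * k x t / (marg1 (\<lambda>x t. w x * k x t) x * marg2 (\<lambda>x t. w x * k x t) t)))
       = (\<lambda>(x,t). w x * (k x t * ln (k x t / qw w k t)))"
    using wpos by (auto simp: m1 m2 fun_eq_iff)
  then show ?thesis unfolding mutual_info_def using Iw_has_sum by (simp add: infsumI)
qed

lemma qw_es: "qw w (es s k) t = (if t = 0 then 1 - s else s * qw w k (t - 1))"
  unfolding qw_def es_def
  by (auto simp: sum_distrib_left sum_distrib_right[symmetric] wsum mult_ac)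

lemma Dw_es:
  assumes "0 \<le> s" "s \<le> 1"
  shows "Dw w (es s k) x = s * Dw w k x"
proof -
  have h: "((\<lambda>t. s * (k x t * ln (k x t / qw w k t))) has_sum s * Dw w k x) UNIV"
    unfolding Dw_def by (intro has_sum_cmult_right) (simp add: Dw_summable)
  have "((\<lambda>n. if n = 0 then 0 else s * (k x (n-1) * ln (k x (n-1) / qw w k (n-1)))) has_sum (0 + s * Dw w k x)) UNIV"
    by (rule has_sum_nat_shift[OF h])
  moreover have "(\<lambda>n. if n = 0 then 0 else s * (k x (n-1) * ln (k x (n-1) / qw w k (n-1))))
      = (\<lambda>t. es s k x t * ln (es s k x t / qw w (es s k) t))"
  proof
    fix n show "(if n = 0 then 0 else s * (k x (n-1) * ln (k x (n-1) / qw w k (n-1))))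
      = es s k x n * ln (es s k x n / qw w (es s k) n)"
      by (cases "s = 0") (auto simp: qw_es es_def)
  qed
  ultimately show ?thesis unfolding Dw_def[of w "es s k"] by (simp add: infsumI)
qed

lemma Iw_es:
  assumes "0 \<le> s" "s \<le> 1"
  shows "Iw w (es s k) = s * Iw w k"
  unfolding Iw_def using Dw_es[OF assms] by (simp add: sum_distrib_left mult_ac)

end




definition pX :: "('x::finite \<Rightarrow> 'y::finite \<Rightarrow> real) \<Rightarrow> 'x \<Rightarrow> real" where
  "pX p x = (\<Sum>y\<in>UNIV. p x y)"
definition pY :: "('x::finite \<Rightarrow> 'y::finite \<Rightarrow> real) \<Rightarrow> 'y \<Rightarrow> real" where
  "pY p y = (\<Sum>x\<in>UNIV. p x y)"

definition qT :: "('x::finite \<Rightarrow> 'y::finite \<Rightarrow> real) \<Rightarrow> ('x \<Rightarrow> nat \<Rightarrow> real) \<Rightarrow> ('y \<Rightarrow> nat \<Rightarrow> real) \<Rightarrow> nat \<Rightarrow> nat \<Rightarrow> real" where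
  "qT p a b tx ty = (\<Sum>x\<in>UNIV. \<Sum>y\<in>UNIV. qdist p a b x y tx ty)"

definition JJ :: "('x::finite \<Rightarrow> 'y::finite \<Rightarrow> real) \<Rightarrow> ('x \<Rightarrow> nat \<Rightarrow> real) \<Rightarrow> ('y \<Rightarrow> nat \<Rightarrow> real) \<Rightarrow> real" where
  "JJ p a b = infsum (\<lambda>z. qT p a b (fst z) (snd z) *
       ln (qT p a b (fst z) (snd z) / (qw (pX p) a (fst z) * qw (pY p) b (snd z)))) UNIV"

lemma ln_div_self_aux: "(u::real) * ln (u / u) = 0"
  by (cases "u = 0") simp_all

lemma ln_scale_aux: "(s::real) * A * ln (s * A / (s * B * C)) = s * (A * ln (A / (B * C)))"
proof (cases "s = 0")
  case False
  then have e: "s * A / (s * B * C) = A / (B * C)" by simp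
  show ?thesis unfolding e by (rule mult.assoc)
qed simp

locale pctx =
  fixes p :: "'x::finite \<Rightarrow> 'y::finite \<Rightarrow> real"
  assumes ppos: "\<And>x y. 0 < p x y" and psum: "(\<Sum>x\<in>UNIV. \<Sum>y\<in>UNIV. p x y) = 1"
begin

lemma pX_pos: "0 < pX p x"
  unfolding pX_def by (rule sum_pos) (auto simp: ppos)
lemma pY_pos: "0 < pY p y"
  unfolding pY_def by (rule sum_pos) (auto simp: ppos)
lemma pX_sum: "(\<Sum>x\<in>UNIV. pX p x) = 1" using psum by (simp add: pX_def)
lemma pY_sum: "(\<Sum>y\<in>UNIV. pY p y) = 1"
  unfolding pY_def using psum sum.swap[of "\<lambda>x y. p x y" UNIV UNIV] by simp

lemma wchX: "channel a \<Longrightarrow> wch (pX p) a"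
  by unfold_locales (auto simp: pX_pos pX_sum)
lemma wchY: "channel b \<Longrightarrow> wch (pY p) b"
  by unfold_locales (auto simp: pY_pos pY_sum)

lemma qT_nonneg: "channel a \<Longrightarrow> channel b \<Longrightarrow> 0 \<le> qT p a b tx ty"
  unfolding qT_def qdist_def
  by (intro sum_nonneg mult_nonneg_nonneg) (auto simp: channelD less_imp_le ppos)

lemma qT_marg1:
  assumes a: "channel a" and b: "channel b"
  shows "((\<lambda>ty. qT p a b tx ty) has_sum qw (pX p) a tx) UNIV"
proof -
  have r: "((\<lambda>ty. qdist p a b x y tx ty) has_sum p x y * a x tx) UNIV" for x y
    using has_sum_cmult_right[OF channelD(2)[OF b, of y], of "p x y * a x tx"]
    by (simp add: qdist_def)
  have "((\<lambda>ty. qT p a b tx ty) has_sum (\<Sum>x\<in>UNIV. \<Sum>y\<in>UNIV. p x y * a x tx)) UNIV"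
    unfolding qT_def by (intro has_sum_sum_fin r) auto
  then show ?thesis by (simp add: qw_def pX_def sum_distrib_right)
qed

lemma qT_marg2:
  assumes a: "channel a" and b: "channel b"
  shows "((\<lambda>tx. qT p a b tx ty) has_sum qw (pY p) b ty) UNIV"
proof -
  have r: "((\<lambda>tx. qdist p a b x y tx ty) has_sum p x y * b y ty) UNIV" for x y
    using has_sum_cmult_right[OF channelD(2)[OF a, of x], of "p x y * b y ty"]
    by (simp add: qdist_def mult_ac)
  have "((\<lambda>tx. qT p a b tx ty) has_sum (\<Sum>x\<in>UNIV. \<Sum>y\<in>UNIV. p x y * b y ty)) UNIV"
    unfolding qT_def by (intro has_sum_sum_fin r) auto
  also have "(\<Sum>x\<in>UNIV. \<Sum>y\<in>UNIV. p x y * b y ty) = (\<Sum>y\<in>UNIV. \<Sum>x\<in>UNIV. p x y * b y ty)"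
    by (rule sum.swap)
  finally show ?thesis by (simp add: qw_def pY_def sum_distrib_right)
qed

lemma qT_has_sum:
  assumes a: "channel a" and b: "channel b"
  shows "((\<lambda>z. qT p a b (fst z) (snd z)) has_sum 1) UNIV"
proof -
  interpret X: wch "pX p" a by (rule wchX[OF a])
  have "((\<lambda>(tx,ty). 1 * qT p a b tx ty) has_sum infsum (\<lambda>tx. 1 * qw (pX p) a tx) UNIV) UNIV"
    by (rule has_sum_weighted) (use qT_nonneg[OF a b] qT_marg1[OF a b] has_sum_imp_summable[OF X.qw_has_sum] in auto)
  then show ?thesis using infsumI[OF X.qw_has_sum] by (simp add: case_prod_unfold)
qed

lemma prod_has_sum:
  assumes a: "channel a" and b: "channel b"
  shows "((\<lambda>z. qw (pX p) a (fst z) * qw (pY p) b (snd z)) has_sum 1) UNIV"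
proof -
  interpret X: wch "pX p" a by (rule wchX[OF a])
  interpret Y: wch "pY p" b by (rule wchY[OF b])
  have "((\<lambda>(tx,ty). qw (pX p) a tx * qw (pY p) b ty) has_sum infsum (\<lambda>tx. qw (pX p) a tx * 1) UNIV) UNIV"
    by (rule has_sum_weighted) (use Y.qw_nonneg Y.qw_has_sum has_sum_imp_summable[OF X.qw_has_sum] in auto)
  then show ?thesis using infsumI[OF X.qw_has_sum] by (simp add: case_prod_unfold)
qed

definition CC where "CC = (\<Sum>y\<in>UNIV. 1 / pY p y)"

lemma CC_pos: "0 < CC"
  unfolding CC_def by (rule sum_pos) (auto simp: pY_pos)

lemma p_le: "p x y \<le> CC * (pX p x * pY p y)"
proof -
  have "p x y \<le> pX p x" unfolding pX_def by (rule member_le_sum) (auto simp: ppos less_imp_le)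
  moreover have "1 / pY p y \<le> CC" unfolding CC_def
    by (rule member_le_sum) (auto simp: pY_pos less_imp_le)
  then have "1 \<le> CC * pY p y" using pY_pos[of y] by (simp add: field_simps)
  then have "pX p x \<le> pX p x * (CC * pY p y)"
    using pX_pos[of x] by (simp add: mult_le_cancel_left1)
  ultimately show ?thesis by (simp add: mult_ac)
qed

lemma qT_le:
  assumes a: "channel a" and b: "channel b"
  shows "qT p a b tx ty \<le> CC * (qw (pX p) a tx * qw (pY p) b ty)"
proof -
  have "qT p a b tx ty \<le> (\<Sum>x\<in>UNIV. \<Sum>y\<in>UNIV. CC * (pX p x * pY p y) * a x tx * b y ty)"
    unfolding qT_def qdist_def
    by (intro sum_mono mult_right_mono p_le) (auto simp: channelD[OF a] channelD[OF b])
  also have "\<dots> = CC * (qw (pX p) a tx * qw (pY p) b ty)"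
    by (simp add: qw_def sum_product sum_distrib_left mult_ac) (rule sum.swap)
  finally show ?thesis .
qed

lemma JJ_summable:
  assumes a: "channel a" and b: "channel b"
  shows "(\<lambda>z. qT p a b (fst z) (snd z) *
       ln (qT p a b (fst z) (snd z) / (qw (pX p) a (fst z) * qw (pY p) b (snd z)))) summable_on UNIV"
proof -
  interpret X: wch "pX p" a by (rule wchX[OF a])
  interpret Y: wch "pY p" b by (rule wchY[OF b])
  show ?thesis
    by (rule xlnx_summable[where C=CC])
       (use qT_nonneg[OF a b] X.qw_nonneg Y.qw_nonneg CC_pos qT_le[OF a b]
          has_sum_imp_summable[OF qT_has_sum[OF a b]] has_sum_imp_summable[OF prod_has_sum[OF a b]] in auto)
qed

lemma info_TT_JJ:
  assumes a: "channel a" and b: "channel b"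
  shows "info_TT p a b = JJ p a b"
proof -
  have e: "(\<lambda>tx ty. \<Sum>x\<in>UNIV. \<Sum>y\<in>UNIV. qdist p a b x y tx ty) = qT p a b"
    by (simp add: qT_def[abs_def])
  have m1: "marg1 (qT p a b) tx = qw (pX p) a tx" for tx
    unfolding marg1_def by (rule infsumI[OF qT_marg1[OF a b]])
  have m2: "marg2 (qT p a b) ty = qw (pY p) b ty" for ty
    unfolding marg2_def by (rule infsumI[OF qT_marg2[OF a b]])
  show ?thesis unfolding info_TT_def e mutual_info_def JJ_def m1 m2
    by (simp add: case_prod_unfold)
qed

lemma kl_JJ:
  assumes a: "channel a" and b: "channel b"
  shows "kl_div (push_split p a b) (push_split (\<lambda>x y. marg1 p x * marg2 p y) a b) = JJ p a b"
proof -
  have e1: "push_split p a b = (\<lambda>z. qT p a b (fst z) (snd z))"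
    by (auto simp: push_split_def qT_def qdist_def fun_eq_iff mult_ac)
  have e2: "push_split (\<lambda>x y. marg1 p x * marg2 p y) a b = (\<lambda>z. qw (pX p) a (fst z) * qw (pY p) b (snd z))"
  proof -
    have m: "marg1 p = pX p" "marg2 p = pY p"
      by (auto simp: marg1_def marg2_def pX_def pY_def fun_eq_iff)
    have s: "(\<Sum>x\<in>UNIV. \<Sum>y\<in>UNIV. a x tx * b y ty * (pX p x * pY p y)) = qw (pX p) a tx * qw (pY p) b ty" for tx ty
      unfolding qw_def sum_product by (intro sum.cong refl) (simp add: mult_ac)
    show ?thesis by (auto simp: push_split_def m s fun_eq_iff)
  qed
  show ?thesis unfolding e1 e2 kl_div_def JJ_def by simp
qed

lemma objS_eq:
  assumes a: "channel a" and b: "channel b"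
  shows "objS p a b = Iw (pX p) a + Iw (pY p) b"
proof -
  interpret X: wch "pX p" a by (rule wchX[OF a])
  interpret Y: wch "pY p" b by (rule wchY[OF b])
  have e1: "(\<lambda>x tx. \<Sum>y\<in>UNIV. \<Sum>\<^sub>\<infinity>ty. qdist p a b x y tx ty) = (\<lambda>x t. pX p x * a x t)"
  proof (intro ext)
    fix x tx
    have "(\<Sum>\<^sub>\<infinity>ty. qdist p a b x y tx ty) = p x y * a x tx" for y
      using infsumI[OF has_sum_cmult_right[OF channelD(2)[OF b, of y], of "p x y * a x tx"]]
      by (simp add: qdist_def)
    then show "(\<Sum>y\<in>UNIV. \<Sum>\<^sub>\<infinity>ty. qdist p a b x y tx ty) = pX p x * a x tx"
      by (simp add: pX_def sum_distrib_right)
  qed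
  have e2: "(\<lambda>y ty. \<Sum>x\<in>UNIV. \<Sum>\<^sub>\<infinity>tx. qdist p a b x y tx ty) = (\<lambda>y t. pY p y * b y t)"
  proof (intro ext)
    fix y ty
    have "(\<Sum>\<^sub>\<infinity>tx. qdist p a b x y tx ty) = p x y * b y ty" for x
      using infsumI[OF has_sum_cmult_right[OF channelD(2)[OF a, of x], of "p x y * b y ty"]]
      by (simp add: qdist_def mult_ac)
    then show "(\<Sum>x\<in>UNIV. \<Sum>\<^sub>\<infinity>tx. qdist p a b x y tx ty) = pY p y * b y ty"
      by (simp add: pY_def sum_distrib_right)
  qed
  show ?thesis unfolding objS_def e1 e2 X.mi_w Y.mi_w ..
qed

lemma sum_swap_pY:
  "(\<Sum>x\<in>UNIV. \<Sum>y\<in>UNIV. p x y * c * b y ty) = c * qw (pY p) b ty"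
proof -
  have "(\<Sum>x\<in>UNIV. \<Sum>y\<in>UNIV. p x y * c * b y ty) = (\<Sum>y\<in>UNIV. \<Sum>x\<in>UNIV. p x y * c * b y ty)"
    by (rule sum.swap)
  also have "\<dots> = (\<Sum>y\<in>UNIV. c * (pY p y * b y ty))"
    by (simp add: pY_def sum_distrib_right sum_distrib_left mult_ac)
  also have "\<dots> = c * qw (pY p) b ty"
    by (simp add: qw_def sum_distrib_left)
  finally show ?thesis .
qed

lemma JJ_zero:
  assumes a: "channel a" and b: "channel b" and c: "\<And>x t. a x t = qw (pX p) a t"
  shows "JJ p a b = 0"
proof -
  have "qT p a b tx ty = qw (pX p) a tx * qw (pY p) b ty" for tx ty
  proof -
    have "qT p a b tx ty = (\<Sum>x\<in>UNIV. \<Sum>y\<in>UNIV. p x y * qw (pX p) a tx * b y ty)"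
      unfolding qT_def qdist_def by (subst c) simp
    also have "\<dots> = qw (pX p) a tx * qw (pY p) b ty"
      by (rule sum_swap_pY)
    finally show ?thesis .
  qed
  then show ?thesis unfolding JJ_def by (simp only: ln_div_self_aux) simp
qed

lemma qT_es:
  assumes "channel a" "channel b"
  shows "qT p (es s a) b tx ty = (if tx = 0 then (1 - s) * qw (pY p) b ty else s * qT p a b (tx - 1) ty)"
proof (cases "tx = 0")
  case True
  have "qT p (es s a) b tx ty = (\<Sum>x\<in>UNIV. \<Sum>y\<in>UNIV. p x y * (1 - s) * b y ty)"
    unfolding qT_def qdist_def es_def using True by simp
  also have "\<dots> = (1 - s) * qw (pY p) b ty" by (rule sum_swap_pY)
  finally show ?thesis using True by simp
next
  case False
  have "qT p (es s a) b tx ty = (\<Sum>x\<in>UNIV. \<Sum>y\<in>UNIV. s * (p x y * a x (tx - 1) * b y ty))"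
    unfolding qT_def qdist_def es_def using False by (simp add: mult_ac)
  also have "\<dots> = s * qT p a b (tx - 1) ty"
    by (simp add: qT_def qdist_def sum_distrib_left)
  finally show ?thesis using False by simp
qed

lemma JJ_es:
  assumes a: "channel a" and b: "channel b" and s: "0 \<le> s" "s \<le> 1"
  shows "JJ p (es s a) b = s * JJ p a b"
proof -
  interpret X: wch "pX p" a by (rule wchX[OF a])
  define f where "f z = qT p a b (fst z) (snd z) *
       ln (qT p a b (fst z) (snd z) / (qw (pX p) a (fst z) * qw (pY p) b (snd z)))" for z
  define f' where "f' z = qT p (es s a) b (fst z) (snd z) *
       ln (qT p (es s a) b (fst z) (snd z) / (qw (pX p) (es s a) (fst z) * qw (pY p) b (snd z)))" for z
  have h: "((\<lambda>z. s * f z) has_sum s * JJ p a b) UNIV"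
    unfolding JJ_def f_def[symmetric]
    by (intro has_sum_cmult_right) (simp add: JJ_summable[OF a b, folded f_def])
  have "(f' has_sum s * JJ p a b) UNIV"
  proof (rule has_sum_inj_shift[where g="\<lambda>(n,ty). (Suc n, ty)", OF _ _ _ h])
    show "inj (\<lambda>(n::nat, ty::nat). (Suc n, ty))" by (auto simp: inj_def)
    fix z :: "nat \<times> nat"
    show "z \<notin> range (\<lambda>(n, ty). (Suc n, ty)) \<Longrightarrow> f' z = 0"
    proof -
      assume "z \<notin> range (\<lambda>(n, ty). (Suc n, ty))"
      then have "fst z = 0"
        by (metis (no_types, lifting) case_prod_conv not0_implies_Suc prod.collapse rangeI)
      then show "f' z = 0" unfolding f'_def
        by (simp only: qT_es[OF a b] X.qw_es if_P[OF refl] ln_div_self_aux)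
    qed
    obtain n ty where z: "z = (n, ty)" by (cases z)
    show "f' ((\<lambda>(n, ty). (Suc n, ty)) z) = s * f z"
      unfolding f'_def f_def z
      by (simp only: case_prod_conv fst_conv snd_conv qT_es[OF a b] X.qw_es Suc_not_Zero if_False diff_Suc_1 ln_scale_aux)
  qed
  then show ?thesis unfolding JJ_def f'_def[symmetric] by (simp add: infsumI)
qed

end




lemma has_sum_bij_UNIV:
  assumes "bij g"
  shows "((\<lambda>x. F (g x)) has_sum S) UNIV \<longleftrightarrow> (F has_sum S) UNIV"
  using has_sum_reindex_bij_betw[of g UNIV UNIV F S] assms by simp

lemma decomp_aux:
  fixes P A B QA QB QT :: real
  assumes "0 < P" "0 < A" "0 < B" "0 < QA" "0 < QB" "0 < QT"
  shows "P * A * B * ln (P * A * B / (P * QT)) =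
     A * ln (A / QA) * (P * B) + B * ln (B / QB) * (P * A) - ln (QT / (QA * QB)) * (P * A * B)"
proof -
  have e0: "P * A * B / (P * QT) = A * B / QT" using assms by simp
  have e1: "ln (A * B / QT) = ln A + ln B - ln QT" using assms by (simp add: ln_div ln_mult)
  have e2: "ln (A / QA) = ln A - ln QA" using assms by (simp add: ln_div)
  have e3: "ln (B / QB) = ln B - ln QB" using assms by (simp add: ln_div)
  have e4: "ln (QT / (QA * QB)) = ln QT - ln QA - ln QB" using assms by (simp add: ln_div ln_mult)
  show ?thesis unfolding e0 e1 e2 e3 e4 by (simp add: algebra_simps)
qed

lemma sum_UNIV_pair:
  fixes f :: "'a::finite \<times> 'b::finite \<Rightarrow> real"
  shows "(\<Sum>u\<in>UNIV. f u) = (\<Sum>x\<in>UNIV. \<Sum>y\<in>UNIV. f (x,y))"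
proof -
  have "(\<Sum>x\<in>UNIV. \<Sum>y\<in>UNIV. f (x,y)) = (\<Sum>(x,y)\<in>UNIV\<times>UNIV. f (x,y))"
    by (rule sum.cartesian_product)
  then show ?thesis by simp
qed

context pctx
begin

lemma qdist_le_qT:
  assumes a: "channel a" and b: "channel b"
  shows "qdist p a b x y tx ty \<le> qT p a b tx ty"
proof -
  have nn: "0 \<le> qdist p a b x y tx ty" for x y
    unfolding qdist_def by (intro mult_nonneg_nonneg) (auto simp: channelD[OF a] channelD[OF b] less_imp_le ppos)
  have "qdist p a b x y tx ty \<le> (\<Sum>y\<in>UNIV. qdist p a b x y tx ty)"
    by (rule member_le_sum) (auto simp: nn)
  also have "\<dots> \<le> (\<Sum>x\<in>UNIV. \<Sum>y\<in>UNIV. qdist p a b x y tx ty)"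
    by (rule member_le_sum[where f="\<lambda>x. \<Sum>y\<in>UNIV. qdist p a b x y tx ty"]) (auto intro: sum_nonneg nn)
  finally show ?thesis by (simp add: qT_def)
qed

lemma objA_eq:
  assumes a: "channel a" and b: "channel b"
  shows "objA p a b = Iw (pX p) a + Iw (pY p) b - JJ p a b"
proof -
  interpret X: wch "pX p" a by (rule wchX[OF a])
  interpret Y: wch "pY p" b by (rule wchY[OF b])
  define R where "R = (\<lambda>(x,y) (tx,ty). qdist p a b x y tx ty)"
  have m1: "marg1 R (x,y) = p x y" for x y
  proof -
    have "((\<lambda>(tx,ty). (p x y * a x tx) * b y ty) has_sum infsum (\<lambda>tx. (p x y * a x tx) * 1) UNIV) UNIV"
      by (rule has_sum_weighted)
         (use channelD[OF b] has_sum_imp_summable[OF has_sum_cmult_right[OF channelD(2)[OF a, of x]]] in auto)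
    moreover have "infsum (\<lambda>tx. (p x y * a x tx) * 1) UNIV = p x y"
      using infsumI[OF has_sum_cmult_right[OF channelD(2)[OF a, of x], of "p x y"]] by simp
    ultimately have "((\<lambda>(tx,ty). p x y * a x tx * b y ty) has_sum p x y) UNIV" by simp
    then have "infsum (\<lambda>(tx,ty). p x y * a x tx * b y ty) UNIV = p x y" by (rule infsumI)
    then show ?thesis unfolding marg1_def R_def qdist_def by simp
  qed
  have m2: "marg2 R (tx,ty) = qT p a b tx ty" for tx ty
    unfolding marg2_def R_def qT_def by (simp add: sum_UNIV_pair)
  define g1 where "g1 = (\<lambda>((x::'x,y::'y),(tx::nat,ty::nat)).
      a x tx * ln (a x tx / qw (pX p) a tx) * (p x y * b y ty))"
  define g2 where "g2 = (\<lambda>((x::'x,y::'y),(tx::nat,ty::nat)).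
      b y ty * ln (b y ty / qw (pY p) b ty) * (p x y * a x tx))"
  define g3 where "g3 = (\<lambda>((x::'x,y::'y),(tx::nat,ty::nat)).
      ln (qT p a b tx ty / (qw (pX p) a tx * qw (pY p) b ty)) * qdist p a b x y tx ty)"
  have pt: "R u v * ln (R u v / (marg1 R u * marg2 R v)) = g1 (u,v) + g2 (u,v) - g3 (u,v)" for u v
  proof -
    obtain x y where u: "u = (x,y)" by (cases u)
    obtain tx ty where v: "v = (tx,ty)" by (cases v)
    show ?thesis
    proof (cases "a x tx = 0 \<or> b y ty = 0")
      case True
      then show ?thesis unfolding u v R_def g1_def g2_def g3_def qdist_def by auto
    next
      case False
      then have A: "0 < a x tx" and B: "0 < b y ty"
        using channelD(1)[OF a, of x tx] channelD(1)[OF b, of y ty] by auto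
      have QT: "0 < qT p a b tx ty"
        using qdist_le_qT[OF a b, of x y tx ty] A B ppos[of x y] unfolding qdist_def
        by (smt (verit) mult_pos_pos)
      show ?thesis unfolding u v m1 m2 unfolding R_def g1_def g2_def g3_def qdist_def prod.case
        by (rule decomp_aux[OF ppos[of x y] A B X.qw_pos[OF A] Y.qw_pos[OF B] QT])
    qed
  qed
  have h1: "(g1 has_sum Iw (pX p) a) UNIV"
  proof -
    define h where "h = (\<lambda>(x,tx). a x tx * ln (a x tx / qw (pX p) a tx))"
    define w where "w = (\<lambda>(x::'x,tx::nat) (y::'y,ty::nat). p x y * b y ty)"
    have wW: "(w u has_sum pX p (fst u)) UNIV" for u
    proof -
      obtain x tx where u: "u = (x,tx)" by (cases u)
      have "((\<lambda>ty. p x y * b y ty) has_sum p x y) UNIV" for y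
        using has_sum_cmult_right[OF channelD(2)[OF b, of y], of "p x y"] by simp
      then have "((\<lambda>(y,ty). p x y * b y ty) has_sum (\<Sum>y\<in>UNIV. p x y)) UNIV"
        by (intro has_sum_fin_prod) simp
      then show ?thesis by (simp add: u w_def pX_def)
    qed
    have I: "((\<lambda>u. h u * pX p (fst u)) has_sum Iw (pX p) a) UNIV"
      using X.Iw_has_sum by (simp add: h_def case_prod_unfold mult_ac)
    have "((\<lambda>(u,v). h u * w u v) has_sum infsum (\<lambda>u. h u * pX p (fst u)) UNIV) UNIV"
      by (rule has_sum_weighted)
         (use wW has_sum_imp_summable[OF I] channelD(1)[OF b] ppos in \<open>auto simp: w_def less_imp_le\<close>)
    then have "((\<lambda>(u,v). h u * w u v) has_sum Iw (pX p) a) UNIV" using infsumI[OF I] by simp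
    moreover have "bij (\<lambda>((x::'x,y::'y),(tx::nat,ty::nat)). ((x,tx),(y,ty)))"
      by (rule o_bij[where g="\<lambda>((x,tx),(y,ty)). ((x,y),(tx,ty))"]) (auto simp: fun_eq_iff)
    ultimately have "((\<lambda>z. (\<lambda>(u,v). h u * w u v) ((\<lambda>((x::'x,y::'y),(tx::nat,ty::nat)). ((x,tx),(y,ty))) z)) has_sum Iw (pX p) a) UNIV"
      using has_sum_bij_UNIV by blast
    then show ?thesis unfolding g1_def h_def w_def by (simp add: case_prod_unfold)
  qed
  have h2: "(g2 has_sum Iw (pY p) b) UNIV"
  proof -
    define h where "h = (\<lambda>(y,ty). b y ty * ln (b y ty / qw (pY p) b ty))"
    define w where "w = (\<lambda>(y::'y,ty::nat) (x::'x,tx::nat). p x y * a x tx)"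
    have wW: "(w u has_sum pY p (fst u)) UNIV" for u
    proof -
      obtain y ty where u: "u = (y,ty)" by (cases u)
      have "((\<lambda>tx. p x y * a x tx) has_sum p x y) UNIV" for x
        using has_sum_cmult_right[OF channelD(2)[OF a, of x], of "p x y"] by simp
      then have "((\<lambda>(x,tx). p x y * a x tx) has_sum (\<Sum>x\<in>UNIV. p x y)) UNIV"
        by (intro has_sum_fin_prod) simp
      then show ?thesis by (simp add: u w_def pY_def)
    qed
    have I: "((\<lambda>u. h u * pY p (fst u)) has_sum Iw (pY p) b) UNIV"
      using Y.Iw_has_sum by (simp add: h_def case_prod_unfold mult_ac)
    have "((\<lambda>(u,v). h u * w u v) has_sum infsum (\<lambda>u. h u * pY p (fst u)) UNIV) UNIV"
      by (rule has_sum_weighted)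
         (use wW has_sum_imp_summable[OF I] channelD(1)[OF a] ppos in \<open>auto simp: w_def less_imp_le\<close>)
    then have "((\<lambda>(u,v). h u * w u v) has_sum Iw (pY p) b) UNIV" using infsumI[OF I] by simp
    moreover have "bij (\<lambda>((x::'x,y::'y),(tx::nat,ty::nat)). ((y,ty),(x,tx)))"
      by (rule o_bij[where g="\<lambda>((y,ty),(x,tx)). ((x,y),(tx,ty))"]) (auto simp: fun_eq_iff)
    ultimately have "((\<lambda>z. (\<lambda>(u,v). h u * w u v) ((\<lambda>((x::'x,y::'y),(tx::nat,ty::nat)). ((y,ty),(x,tx))) z)) has_sum Iw (pY p) b) UNIV"
      using has_sum_bij_UNIV by blast
    then show ?thesis unfolding g2_def h_def w_def by (simp add: case_prod_unfold)
  qed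
  have h3: "(g3 has_sum JJ p a b) UNIV"
  proof -
    define h where "h = (\<lambda>(tx,ty). ln (qT p a b tx ty / (qw (pX p) a tx * qw (pY p) b ty)))"
    define w where "w = (\<lambda>(tx::nat,ty::nat) (x::'x,y::'y). qdist p a b x y tx ty)"
    have wW: "(w u has_sum qT p a b (fst u) (snd u)) UNIV" for u
    proof -
      obtain tx ty where u: "u = (tx,ty)" by (cases u)
      have s: "sum (w u) UNIV = qT p a b tx ty"
        unfolding u w_def qT_def by (subst sum_UNIV_pair) simp
      have "(w u has_sum qT p a b tx ty) UNIV" by (rule has_sum_finiteI) (simp_all add: s)
      then show ?thesis by (simp add: u)
    qed
    have I: "((\<lambda>u. h u * qT p a b (fst u) (snd u)) has_sum JJ p a b) UNIV"
      using JJ_summable[OF a b] unfolding JJ_def by (simp add: h_def case_prod_unfold mult_ac)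
    have "((\<lambda>(u,v). h u * w u v) has_sum infsum (\<lambda>u. h u * qT p a b (fst u) (snd u)) UNIV) UNIV"
      by (rule has_sum_weighted)
         (use wW has_sum_imp_summable[OF I] channelD(1)[OF a] channelD(1)[OF b] ppos in \<open>auto simp: w_def qdist_def less_imp_le\<close>)
    then have "((\<lambda>(u,v). h u * w u v) has_sum JJ p a b) UNIV" using infsumI[OF I] by simp
    moreover have "bij (\<lambda>((x::'x,y::'y),(tx::nat,ty::nat)). ((tx,ty),(x,y)))"
      by (rule o_bij[where g="\<lambda>((tx,ty),(x,y)). ((x,y),(tx,ty))"]) (auto simp: fun_eq_iff)
    ultimately have "((\<lambda>z. (\<lambda>(u,v). h u * w u v) ((\<lambda>((x::'x,y::'y),(tx::nat,ty::nat)). ((tx,ty),(x,y))) z)) has_sum JJ p a b) UNIV"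
      using has_sum_bij_UNIV by blast
    then show ?thesis unfolding g3_def h_def w_def by (simp add: case_prod_unfold)
  qed
  have "((\<lambda>z. g1 z + g2 z - g3 z) has_sum (Iw (pX p) a + Iw (pY p) b - JJ p a b)) UNIV"
    by (intro has_sum_diff_real has_sum_add h1 h2 h3)
  moreover have "objA p a b = infsum (\<lambda>z. g1 z + g2 z - g3 z) UNIV"
    unfolding objA_def mutual_info_def R_def[symmetric]
    using pt by (simp add: case_prod_unfold)
  ultimately show ?thesis by (simp add: infsumI)
qed

end




context pctx
begin

lemma feas_eq_A: "feasS_eq p lam a b \<longleftrightarrow> feasA p lam a b"
  unfolding feasS_eq_def feasA_def using info_TT_JJ kl_JJ by auto

lemma objS_objA:
  assumes a: "channel a" and b: "channel b"
  shows "objS p a b = objA p a b + info_TT p a b"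
  using objS_eq[OF a b] objA_eq[OF a b] info_TT_JJ[OF a b] by simp

lemma reduce:
  assumes a: "channel a" and b: "channel b" and lam: "0 \<le> lam" and gt: "lam < info_TT p a b"
  shows "\<exists>a'. feasS_eq p lam a' b \<and> objS p a' b \<le> objS p a b
              \<and> (0 < Iw (pX p) a \<longrightarrow> objS p a' b < objS p a b)"
proof -
  interpret X: wch "pX p" a by (rule wchX[OF a])
  define s where "s = lam / JJ p a b"
  have J: "lam < JJ p a b" using gt info_TT_JJ[OF a b] by simp
  then have s0: "0 \<le> s" and s1: "s < 1" using lam by (auto simp: s_def field_simps)
  have ch': "channel (es s a)" using es_channel[OF a s0] s1 by simp
  have "info_TT p (es s a) b = s * JJ p a b"
    using info_TT_JJ[OF ch' b] JJ_es[OF a b s0] s1 by simp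
  also have "\<dots> = lam" using J lam by (simp add: s_def)
  finally have f: "feasS_eq p lam (es s a) b" using ch' b by (simp add: feasS_eq_def)
  have o: "objS p (es s a) b = s * Iw (pX p) a + Iw (pY p) b"
    using objS_eq[OF ch' b] X.Iw_es[OF s0] s1 by simp
  have Inn: "0 \<le> Iw (pX p) a" by (rule X.Iw_nonneg_zero(1))
  have "objS p (es s a) b \<le> objS p a b"
    using o objS_eq[OF a b] Inn s1 by (simp add: mult_left_le_one_le s0)
  moreover have "0 < Iw (pX p) a \<longrightarrow> objS p (es s a) b < objS p a b"
    using o objS_eq[OF a b] s1 by simp
  ultimately show ?thesis using f by blast
qed

lemma Iw_pos:
  assumes a: "channel a" and b: "channel b" and lam: "0 \<le> lam" and gt: "lam < info_TT p a b"
  shows "0 < Iw (pX p) a"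
proof (rule ccontr)
  interpret X: wch "pX p" a by (rule wchX[OF a])
  assume "\<not> 0 < Iw (pX p) a"
  then have "Iw (pX p) a = 0" using X.Iw_nonneg_zero(1) by simp
  then have "\<And>x t. a x t = qw (pX p) a t" using X.Iw_nonneg_zero(2) by blast
  then have "JJ p a b = 0" by (rule JJ_zero[OF a b])
  then show False using gt lam info_TT_JJ[OF a b] by simp
qed

end

theorem proposition6:
  fixes p :: "'x::finite \<Rightarrow> 'y::finite \<Rightarrow> real" and lam :: real
  assumes "\<forall>x y. 0 < p x y"
    and "(\<Sum>x\<in>UNIV. \<Sum>y\<in>UNIV. p x y) = 1"
    and "0 \<le> lam" and "lam \<le> mutual_info p"
  shows "(\<forall>kX kY. is_solution (feasS_ge p lam) (objS p) kX kY
                    \<longleftrightarrow> is_solution (feasS_eq p lam) (objS p) kX kY)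
       \<and> (\<forall>kX kY. is_solution (feasA p lam) (objA p) kX kY
                    \<longleftrightarrow> is_solution (feasS_ge p lam) (objS p) kX kY)"
proof -
  interpret pctx p using assms(1,2) by unfold_locales auto
  have lam: "0 \<le> lam" by (rule assms(3))
  have i: "is_solution (feasS_ge p lam) (objS p) a b \<longleftrightarrow> is_solution (feasS_eq p lam) (objS p) a b" for a b
  proof
    assume S: "is_solution (feasS_ge p lam) (objS p) a b"
    then have fg: "feasS_ge p lam a b" and mn: "\<And>a' b'. feasS_ge p lam a' b' \<Longrightarrow> objS p a b \<le> objS p a' b'"
      by (auto simp: is_solution_def)
    have ch: "channel a" "channel b" and ge: "lam \<le> info_TT p a b" using fg by (auto simp: feasS_ge_def)
    have "info_TT p a b = lam"
    proof (rule ccontr)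
      assume "info_TT p a b \<noteq> lam"
      then have gt: "lam < info_TT p a b" using ge by simp
      obtain a' where f': "feasS_eq p lam a' b" and lt: "0 < Iw (pX p) a \<longrightarrow> objS p a' b < objS p a b"
        using reduce[OF ch lam gt] by blast
      have "objS p a' b < objS p a b" using lt Iw_pos[OF ch lam gt] by simp
      moreover have "feasS_ge p lam a' b" using f' by (simp add: feasS_eq_def feasS_ge_def)
      ultimately show False using mn by fastforce
    qed
    then have "feasS_eq p lam a b" using ch by (simp add: feasS_eq_def)
    moreover have "\<And>a' b'. feasS_eq p lam a' b' \<Longrightarrow> objS p a b \<le> objS p a' b'"
      using mn by (simp add: feasS_eq_def feasS_ge_def)
    ultimately show "is_solution (feasS_eq p lam) (objS p) a b" by (simp add: is_solution_def)
  next
    assume S: "is_solution (feasS_eq p lam) (objS p) a b"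
    then have fe: "feasS_eq p lam a b" and mn: "\<And>a' b'. feasS_eq p lam a' b' \<Longrightarrow> objS p a b \<le> objS p a' b'"
      by (auto simp: is_solution_def)
    have "objS p a b \<le> objS p a' b'" if fg: "feasS_ge p lam a' b'" for a' b'
    proof (cases "info_TT p a' b' = lam")
      case True
      then show ?thesis using fg mn by (simp add: feasS_eq_def feasS_ge_def)
    next
      case False
      have ch: "channel a'" "channel b'" and ge: "lam \<le> info_TT p a' b'" using fg by (auto simp: feasS_ge_def)
      then have gt: "lam < info_TT p a' b'" using False by simp
      obtain a'' where f': "feasS_eq p lam a'' b'" and le: "objS p a'' b' \<le> objS p a' b'"
        using reduce[OF ch lam gt] by blast
      then show ?thesis using mn[OF f'] by simp
    qed
    moreover have "feasS_ge p lam a b" using fe by (simp add: feasS_eq_def feasS_ge_def)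
    ultimately show "is_solution (feasS_ge p lam) (objS p) a b" by (simp add: is_solution_def)
  qed
  have ii: "is_solution (feasA p lam) (objA p) a b \<longleftrightarrow> is_solution (feasS_eq p lam) (objS p) a b" for a b
  proof -
    have fe: "feasS_eq p lam = feasA p lam" using feas_eq_A by (intro ext) simp
    have ob: "feasS_eq p lam a' b' \<Longrightarrow> objS p a' b' = objA p a' b' + lam" for a' b'
      using objS_objA by (simp add: feasS_eq_def)
    show ?thesis unfolding is_solution_def fe using ob[unfolded fe] by auto
  qed
  show ?thesis using i ii by blast
qed


end
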